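(* Let $\mathsf{R}$ be a commutative ring and $f=\sum_{k=1}^t a_k\mathbf{x}^{\mathbf{e}_k}\in\mathsf{R}[x_1,\ldots,x_n]$ with max degree less than $D$ and at most $T$ nonzero terms. Set $\nu = \max(4n, 8\ln(10T))$, and choose $\nu$ vectors $\mathbf{s}\in\mathbb{Z}^n$, independently, according to a distribution such that for any single such random $\mathbf{s}$ and any particular term of $f$, the probability that the term collides with another term in $f(z^{s_1},\ldots,z^{s_n})$ is less than $1/4$. Then, with probability at least $9/10$, every term of $f$ collides with no other term for at least $2n$ of the substitutions.
   Context: Here $\mathbf{x}^{\mathbf{e}} = x_1^{e_1}\cdots x_n^{e_n}$, the $a_k$ are nonzero and the $\mathbf{e}_k$ pairwise distinct; max degree less than $D$ means every variable occurs with exponent less than $D$. The $i$th term collides in the substitution $\mathbf{s}=(s_1,\ldots,s_n)$ if there is $j\ne i$ with $\mathbf{e}_i\cdot\mathbf{s}=\mathbf{e}_j\cdot\mathbf{s}$. *)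

theory Defs
  imports "HOL-Probability.Probability"
begin

text \<open>A sparse polynomial f = sum_{k<t} a_k x^(e_k) in n variables is represented by
  its number of terms t, coefficients a :: nat => 'r, and exponent vectors
  e :: nat => nat => nat (e k i is the exponent of x_i in the k-th term, k < t, i < n).
  A substitution vector s in Z^n is a function nat => int (only entries i < n matter).\<close>

definition dotp :: "nat \<Rightarrow> (nat \<Rightarrow> nat) \<Rightarrow> (nat \<Rightarrow> int) \<Rightarrow> int" where
  "dotp n u s = (\<Sum>i<n. int (u i) * s i)"

definition collides :: "nat \<Rightarrow> nat \<Rightarrow> (nat \<Rightarrow> nat \<Rightarrow> nat) \<Rightarrow> nat \<Rightarrow> (nat \<Rightarrow> int) \<Rightarrow> bool" where
  "collides n t e k s \<longleftrightarrow> (\<exists>j<t. j \<noteq> k \<and> dotp n (e j) s = dotp n (e k) s)"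

definition sparse_poly :: "nat \<Rightarrow> nat \<Rightarrow> nat \<Rightarrow> (nat \<Rightarrow> 'r::comm_ring_1) \<Rightarrow> (nat \<Rightarrow> nat \<Rightarrow> nat) \<Rightarrow> bool" where
  "sparse_poly n D t a e \<longleftrightarrow>
     (\<forall>k<t. a k \<noteq> 0) \<and>
     (\<forall>k<t. \<forall>i<n. e k i < D) \<and>
     (\<forall>k<t. \<forall>j<t. k \<noteq> j \<longrightarrow> (\<exists>i<n. e k i \<noteq> e j i))"

end

theory Submission
  imports Defs
begin

lemma map_pmf_bool_bernoulli:
  "map_pmf P p = bernoulli_pmf (measure_pmf.prob p {x. P x})"
proof (rule pmf_eqI)
  fix b :: bool
  have c: "measure_pmf.prob p {x. \<not> P x} = 1 - measure_pmf.prob p {x. P x}"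
    using measure_pmf.prob_compl[of "{x. P x}" p]
    by (simp add: Compl_eq_Diff_UNIV[symmetric] Collect_neg_eq)
  show "pmf (map_pmf P p) b = pmf (bernoulli_pmf (measure_pmf.prob p {x. P x})) b"
    by (cases b) (auto simp: pmf_map vimage_def c)
qed

lemma binom_tail:
  fixes p :: "'a pmf" and B :: "'a \<Rightarrow> bool" and \<nu> m :: nat
  assumes q: "measure_pmf.prob p {s. B s} > 3/4"
    and m: "4 * real m \<le> real \<nu>" and pos: "\<nu> > 0"
  shows "measure_pmf.prob (Pi_pmf {..<\<nu>} undefined (\<lambda>_. p))
           {ss. card {j\<in>{..<\<nu>}. B (ss j)} < 2 * m} \<le> exp (- real \<nu> / 8)"
proof -
  define q where "q = measure_pmf.prob p {s. B s}"
  have q01: "q \<in> {0..1}" by (simp add: q_def)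
  have "binomial_pmf \<nu> q = map_pmf (\<lambda>f. card {x\<in>{..<\<nu>}. f x})
           (Pi_pmf {..<\<nu>} (B undefined) (\<lambda>_. bernoulli_pmf q))"
    by (rule binomial_pmf_altdef') (use q01 in auto)
  also have "Pi_pmf {..<\<nu>} (B undefined) (\<lambda>_. bernoulli_pmf q)
      = Pi_pmf {..<\<nu>} (B undefined) (\<lambda>_. map_pmf B p)"
    by (simp add: map_pmf_bool_bernoulli q_def)
  also have "\<dots> = map_pmf (\<lambda>h. B \<circ> h) (Pi_pmf {..<\<nu>} undefined (\<lambda>_. p))"
    by (rule Pi_pmf_map) auto
  finally have eq: "binomial_pmf \<nu> q = map_pmf (\<lambda>h. card {x\<in>{..<\<nu>}. B (h x)}) (Pi_pmf {..<\<nu>} undefined (\<lambda>_. p))"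
    by (simp add: pmf.map_comp o_def)
  have "measure_pmf.prob (Pi_pmf {..<\<nu>} undefined (\<lambda>_. p))
           {ss. card {j\<in>{..<\<nu>}. B (ss j)} < 2 * m}
        = measure_pmf.prob (binomial_pmf \<nu> q) {x. x < 2 * m}"
    by (simp add: eq vimage_def)
  also have "\<dots> \<le> measure_pmf.prob (binomial_pmf \<nu> q) {x. real x \<le> real \<nu> * q - real \<nu> / 4}"
  proof (rule measure_pmf.finite_measure_mono)
    show "{x. x < 2 * m} \<subseteq> {x. real x \<le> real \<nu> * q - real \<nu> / 4}"
    proof
      fix x assume "x \<in> {x. x < 2 * m}"
      hence "real x \<le> 2 * real m" by simp
      moreover have "real \<nu> * q \<ge> real \<nu> * (3/4)"
        using q q_def pos by (intro mult_left_mono) auto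
      ultimately show "x \<in> {x. real x \<le> real \<nu> * q - real \<nu> / 4}" using m by simp
    qed
  qed simp
  also have "\<dots> \<le> exp (-2 * (real \<nu> / 4)\<^sup>2 / \<nu>)"
    using binomial_distribution.prob_le[of q \<nu> "real \<nu> / 4"] q01 pos
    by (simp add: binomial_distribution_def)
  also have "-2 * (real \<nu> / 4)\<^sup>2 / \<nu> = - real \<nu> / 8"
    using pos by (simp add: power2_eq_square field_simps)
  finally show ?thesis .
qed

theorem lemma5p1:
  fixes n D t T :: nat
    and a :: "nat \<Rightarrow> 'r::comm_ring_1"
    and e :: "nat \<Rightarrow> nat \<Rightarrow> nat"
    and p :: "(nat \<Rightarrow> int) pmf"
    and \<nu> :: nat
  assumes "sparse_poly n D t a e"
    and "t \<le> T"
    and "\<nu> = nat \<lceil>max (4 * real n) (8 * ln (10 * real T))\<rceil>"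
    and "\<forall>k<t. measure_pmf.prob p {s. collides n t e k s} < 1/4"
  shows "measure_pmf.prob (Pi_pmf {..<\<nu>} undefined (\<lambda>_. p))
           {ss. \<forall>k<t. card {j\<in>{..<\<nu>}. \<not> collides n t e k (ss j)} \<ge> 2 * n} \<ge> 9/10"
proof (cases "n = 0 \<or> t = 0")
  case True
  hence "{ss. \<forall>k<t. card {j\<in>{..<\<nu>}. \<not> collides n t e k (ss j)} \<ge> 2 * n} = UNIV" by auto
  thus ?thesis by simp
next
  case False
  hence n: "n > 0" and t: "t > 0" by auto
  hence T: "T \<ge> 1" using assms(2) by simp
  let ?M = "Pi_pmf {..<\<nu>} undefined (\<lambda>_. p)"
  let ?A = "\<lambda>k. {ss. card {j\<in>{..<\<nu>}. \<not> collides n t e k (ss j)} < 2 * n}"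
  have nu1: "real \<nu> \<ge> 4 * real n" and nu2: "real \<nu> \<ge> 8 * ln (10 * real T)"
  proof -
    define m where "m = max (4 * real n) (8 * ln (10 * real T))"
    have "m \<ge> 0" by (simp add: m_def)
    hence "real \<nu> = of_int \<lceil>m\<rceil>" using assms(3) m_def by simp
    hence "real \<nu> \<ge> m" by linarith
    thus "real \<nu> \<ge> 4 * real n" "real \<nu> \<ge> 8 * ln (10 * real T)" unfolding m_def by auto
  qed
  have pos: "\<nu> > 0" using nu1 n by (metis of_nat_0_less_iff mult_pos_pos of_nat_0_less_iff zero_less_numeral less_le_trans)
  have bound: "measure_pmf.prob ?M (?A k) \<le> 1 / (10 * real T)" if k: "k < t" for k
  proof -
    have c: "measure_pmf.prob p {s. \<not> collides n t e k s} = 1 - measure_pmf.prob p {s. collides n t e k s}"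
      using measure_pmf.prob_compl[of "{s. collides n t e k s}" p]
      by (simp add: Compl_eq_Diff_UNIV[symmetric] Collect_neg_eq)
    have "measure_pmf.prob p {s. \<not> collides n t e k s} > 3/4"
      using assms(4) k c by simp
    hence "measure_pmf.prob ?M (?A k) \<le> exp (- real \<nu> / 8)"
      by (intro binom_tail) (use nu1 pos in auto)
    also have "\<dots> \<le> exp (- ln (10 * real T))" using nu2 by simp
    also have "\<dots> = 1 / (10 * real T)" using T by (simp add: exp_minus field_simps)
    finally show ?thesis .
  qed
  have "measure_pmf.prob ?M (\<Union>k\<in>{..<t}. ?A k) \<le> (\<Sum>k<t. measure_pmf.prob ?M (?A k))"
    by (rule measure_pmf.finite_measure_subadditive_finite) auto
  also have "\<dots> \<le> (\<Sum>k<t. 1 / (10 * real T))" by (intro sum_mono bound) auto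
  also have "\<dots> \<le> 1/10" using T assms(2) by (simp add: field_simps)
  finally have u: "measure_pmf.prob ?M (\<Union>k\<in>{..<t}. ?A k) \<le> 1/10" .
  have "{ss. \<forall>k<t. card {j\<in>{..<\<nu>}. \<not> collides n t e k (ss j)} \<ge> 2 * n}
        = UNIV - (\<Union>k\<in>{..<t}. ?A k)" by (auto simp: not_less)
  moreover have "measure_pmf.prob ?M (UNIV - (\<Union>k\<in>{..<t}. ?A k)) = 1 - measure_pmf.prob ?M (\<Union>k\<in>{..<t}. ?A k)"
    using measure_pmf.prob_compl[of "\<Union>k\<in>{..<t}. ?A k" ?M] by simp
  ultimately show ?thesis using u by simp
qed

end
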